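(* In the generic model, for $a\in\mathbb R$ let $\mathcal P_a:=\mathrm{ev}_a\circ\mathcal P\colon H_R\to\mathbb R$. Then for all $a,b\in\mathbb R$, $$\mathcal P_a\star\mathcal P_b=\mathcal P_{a+b},$$ i.e. $\sum_w\mathcal P(w_1)(a)\,\mathcal P(w_2)(b)=\mathcal P(w)(a+b)$ for every $w\in H_R$.
   Context: Generic model: $f\colon[0,\infty)\to\mathbb R$ continuous with $f(\zeta)-c/\zeta=O(\zeta^{-1-\epsilon})$ at infinity; Mellin transform $F(z)=\int_0^\infty f(\zeta)\zeta^{-z}d\zeta$, meromorphic near $0$. $H_R$: Connes–Kreimer Hopf algebra of rooted trees with coproduct $\Delta w=\sum_w w_1\otimes w_2$ (determined by $\Delta\circ B_+=B_+\otimes\mathbb 1+(\mathrm{id}\otimes B_+)\circ\Delta$), antipode $S$. $\phi_s(w)=s^{-z|w|}\prod_{v}F(z|w_v|)$ multiplicative; $\phi_{R,s}=\phi_\mu^{\star-1}\star\phi_s$ for fixed $\mu>0$; $\mathcal P(w)\in\mathbb R[x]$ is the polynomial with $\lim_{z\to0}\phi_{R,s}(w)=\mathcal P(w)(\ln\frac s\mu)$. Convolution of functionals: $\alpha\star\beta=m\circ(\alpha\otimes\beta)\circ\Delta$. *)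

theory Defs
  imports "HOL-Analysis.Analysis" "HOL-Library.Multiset" "HOL-Library.Poly_Mapping"
    "HOL-Computational_Algebra.Polynomial"
begin

datatype rtree = Node "rtree multiset"   \<comment> \<open>Node ts = B_+ of the forest ts\<close>

type_synonym forest = "rtree multiset"    \<comment> \<open>forests = monomials, basis of H_R; {#} is the unit 1\<close>

primrec nverts :: "rtree \<Rightarrow> nat" where
  "nverts (Node ts) = Suc (sum_mset (image_mset nverts ts))"

primrec subsizes :: "rtree \<Rightarrow> nat multiset" where
  "subsizes (Node ts) =
     add_mset (Suc (sum_mset (image_mset nverts ts))) (sum_mset (image_mset subsizes ts))"

definition fsize :: "forest \<Rightarrow> nat" where
  "fsize w = sum_mset (image_mset nverts w)"

definition fsubsizes :: "forest \<Rightarrow> nat multiset" where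
  "fsubsizes w = sum_mset (image_mset subsizes w)"

section \<open>Connes--Kreimer coproduct (Sweedler sum as a multiset of pairs)\<close>

definition pmul :: "(forest \<times> forest) multiset \<Rightarrow> (forest \<times> forest) multiset
                     \<Rightarrow> (forest \<times> forest) multiset" where
  "pmul A B = sum_mset (image_mset (\<lambda>(a1, b1). image_mset (\<lambda>(a2, b2). (a1 + a2, b1 + b2)) B) A)"

definition fprod :: "(forest \<times> forest) multiset multiset \<Rightarrow> (forest \<times> forest) multiset" where
  "fprod M = fold_mset pmul {#({#}, {#})#} M"

primrec cop_tree :: "rtree \<Rightarrow> (forest \<times> forest) multiset" where
  "cop_tree (Node ts) =
     add_mset ({#Node ts#}, {#})
       (image_mset (\<lambda>(a, b). (a, {#Node b#})) (fprod (image_mset cop_tree ts)))"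

definition cop :: "forest \<Rightarrow> (forest \<times> forest) multiset" where
  "cop w = fprod (image_mset cop_tree w)"

section \<open>Linear functionals (given by their values on the basis of forests)\<close>

definition conv :: "(forest \<Rightarrow> 'a::comm_semiring_1) \<Rightarrow> (forest \<Rightarrow> 'a) \<Rightarrow> forest \<Rightarrow> 'a" where
  "conv \<alpha> \<beta> w = sum_mset (image_mset (\<lambda>(w1, w2). \<alpha> w1 * \<beta> w2) (cop w))"

definition counit :: "forest \<Rightarrow> 'a::comm_semiring_1" where
  "counit w = (if w = {#} then 1 else 0)"

definition conv_inv :: "(forest \<Rightarrow> 'a::comm_ring_1) \<Rightarrow> forest \<Rightarrow> 'a" where
  "conv_inv \<phi> = (THE \<psi>. conv \<psi> \<phi> = counit)"

text \<open>linear extension of a functional to H_R (finite real linear combinations of forests)\<close>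
definition lin :: "(forest \<Rightarrow> real) \<Rightarrow> (forest \<Rightarrow>\<^sub>0 real) \<Rightarrow> real" where
  "lin \<alpha> w = (\<Sum>v\<in>Poly_Mapping.keys w. Poly_Mapping.lookup w v * \<alpha> v)"

definition generic_model :: "(real \<Rightarrow> real) \<Rightarrow> (complex \<Rightarrow> complex) \<Rightarrow> bool" where
  "generic_model f F \<longleftrightarrow>
     continuous_on {0..} f \<and>
     (\<exists>c \<epsilon>::real. \<epsilon> > 0 \<and> (\<lambda>\<zeta>. f \<zeta> - c / \<zeta>) \<in> O[at_top](\<lambda>\<zeta>. \<zeta> powr (-1 - \<epsilon>))) \<and>
     (\<exists>r>0. F holomorphic_on (ball 0 r - {0}) \<and>
        (\<forall>z\<in>ball 0 r. 0 < Re z \<and> Re z < 1 \<longrightarrow>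
            F z = (LINT \<zeta>:{0<..}|lborel. complex_of_real (f \<zeta>) * complex_of_real \<zeta> powr (- z))) \<and>
        (\<exists>(n::nat) g. g holomorphic_on ball 0 r \<and> (\<forall>z\<in>ball 0 r - {0}. g z = z ^ n * F z)))"

definition phi :: "(complex \<Rightarrow> complex) \<Rightarrow> real \<Rightarrow> complex \<Rightarrow> forest \<Rightarrow> complex" where
  "phi F s z w = exp (- z * of_nat (fsize w) * complex_of_real (ln s)) *
                 prod_mset (image_mset (\<lambda>k. F (z * of_nat k)) (fsubsizes w))"

definition phiR :: "(complex \<Rightarrow> complex) \<Rightarrow> real \<Rightarrow> real \<Rightarrow> complex \<Rightarrow> forest \<Rightarrow> complex" where
  "phiR F \<mu> s z = conv (conv_inv (phi F \<mu> z)) (phi F s z)"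

end

theory Submission
  imports Defs
begin

definition pm :: "'a::comm_monoid_add multiset \<Rightarrow> 'a multiset \<Rightarrow> 'a multiset" where
  "pm A B = sum_mset (image_mset (\<lambda>a. image_mset ((+) a) B) A)"

lemma pm_empty1[simp]: "pm {#} B = {#}" by (simp add: pm_def)
lemma pm_add1[simp]: "pm (add_mset a A) B = image_mset ((+) a) B + pm A B" by (simp add: pm_def)
lemma pm_union1[simp]: "pm (A + A') B = pm A B + pm A' B" by (simp add: pm_def)
lemma pm_empty2[simp]: "pm A {#} = {#}" by (induction A) auto
lemma pm_add2[simp]: "pm A (add_mset b B) = image_mset (\<lambda>a. a + b) A + pm A B"
  by (induction A) (auto simp: add.commute)
lemma pm_union2[simp]: "pm A (B + B') = pm A B + pm A B'"
  by (induction A) (auto simp: ac_simps)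
lemma pm_comm: "pm A B = pm B A"
  by (induction A) (auto simp: add.commute)
lemma image_add0[simp]: "image_mset ((+) (0::'a::comm_monoid_add)) M = M" by (induction M) auto
lemma pm_image1: "pm (image_mset ((+) a) B) C = image_mset ((+) a) (pm B C)"
  by (induction B) (auto simp: ac_simps image_mset.compositionality o_def intro!: image_mset_cong)
lemma pm_assoc: "pm (pm A B) C = pm A (pm B C)"
  by (induction A) (auto simp: pm_image1)
lemma pm_unit[simp]: "pm A {#0#} = A" by (induction A) auto
lemma pm_unit1[simp]: "pm {#0#} A = A" by (induction A) auto
lemma pm_single[simp]: "pm {#a#} {#b#} = {#a + b#}" by simp

lemma pm_image:
  assumes "\<And>x y. k (x + y) = g x + h y"
  shows "image_mset k (pm A B) = pm (image_mset g A) (image_mset h B)"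
  by (induction A) (auto simp: assms image_mset.compositionality o_def)

lemma sum_pm2: "sum_mset (image_mset (\<lambda>b. pm X (f b)) B) = pm X (sum_mset (image_mset f B))"
  by (induction B) auto
lemma sum_pm1: "sum_mset (image_mset (\<lambda>b. pm (f b) X) B) = pm (sum_mset (image_mset f B)) X"
  by (induction B) auto

lemma bind_pm:
  assumes "\<And>x y. h (x + y) = pm (h x) (h y)"
  shows "sum_mset (image_mset h (pm A B)) = pm (sum_mset (image_mset h A)) (sum_mset (image_mset h B))"
proof (induction A)
  case empty then show ?case by simp
next
  case (add a A)
  have "sum_mset (image_mset h (image_mset ((+) a) B)) = pm (h a) (sum_mset (image_mset h B))"
    by (simp add: assms sum_pm2 image_mset.compositionality o_def)
  then show ?case using add by simp
qed

lemma filter_pm: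
  assumes "\<And>x y. P (x + y) \<longleftrightarrow> P x \<and> P y"
  shows "filter_mset P (pm A B) = pm (filter_mset P A) (filter_mset P B)"
proof (induction A)
  case empty then show ?case by simp
next
  case (add a A)
  have "filter_mset P (image_mset ((+) a) B) = (if P a then image_mset ((+) a) (filter_mset P B) else {#})"
    by (induction B) (auto simp: assms)
  then show ?case using add by simp
qed

lemma mem_pm: "x \<in># pm A B \<Longrightarrow> \<exists>a\<in>#A. \<exists>b\<in>#B. x = a + b"
  by (induction A) auto

lemma pmul_pm: "pmul A B = pm A B"
  unfolding pmul_def pm_def
  by (intro arg_cong[where f=sum_mset] image_mset_cong) (auto intro!: image_mset_cong)

lemma fprod_add[simp]: "fprod (add_mset x M) = pm x (fprod M)"
proof -
  interpret comp_fun_commute pmul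
    by unfold_locales (auto simp: pmul_pm pm_assoc pm_comm fun_eq_iff intro: pm_comm[THEN arg_cong] 
        , metis pm_assoc pm_comm)
  show ?thesis unfolding fprod_def by (simp add: pmul_pm)
qed

lemma fprod_empty[simp]: "fprod {#} = {#0#}"
  by (simp add: fprod_def zero_prod_def)

lemma cop_empty[simp]: "cop {#} = {#0#}" by (simp add: cop_def)
lemma cop_add: "cop (add_mset t w) = pm (cop_tree t) (cop w)" by (simp add: cop_def)
lemma cop_union: "cop (w + v) = pm (cop w) (cop v)"
  by (induction w) (auto simp: cop_add pm_assoc)
lemma cop_single[simp]: "cop {#t#} = cop_tree t" by (simp add: cop_add)

lemma cop_tree_Node: "cop_tree (Node ts) =
     add_mset ({#Node ts#}, {#}) (image_mset (\<lambda>(a, b). (a, {#Node b#})) (cop ts))"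
  by (simp add: cop_def)


lemma fsize_empty[simp]: "fsize {#} = 0" by (simp add: fsize_def)
lemma fsize_add[simp]: "fsize (add_mset t w) = nverts t + fsize w" by (simp add: fsize_def)
lemma fsize_union[simp]: "fsize (w + v) = fsize w + fsize v" by (simp add: fsize_def)
lemma nverts_Node: "nverts (Node ts) = Suc (fsize ts)" by (simp add: fsize_def)
lemma nverts_pos: "nverts t > 0" by (cases t) auto
lemma fsize_zero_iff[simp]: "fsize w = 0 \<longleftrightarrow> w = {#}"
  by (induction w) (auto simp: nverts_pos)
declare nverts.simps[simp del] cop_tree.simps[simp del]

lemma grading_forest:
  assumes "\<And>t x. t \<in># w \<Longrightarrow> x \<in># cop_tree t \<Longrightarrow> fsize (fst x) + fsize (snd x) = nverts t"
  shows "\<forall>x\<in>#cop w. fsize (fst x) + fsize (snd x) = fsize w"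
  using assms
proof (induction w)
  case empty then show ?case by (simp add: zero_prod_def)
next
  case (add t w)
  show ?case
  proof
    fix x assume "x \<in># cop (add_mset t w)"
    then obtain a b where "a \<in># cop_tree t" "b \<in># cop w" "x = a + b"
      by (auto simp: cop_add dest!: mem_pm)
    moreover have "fsize (fst b) + fsize (snd b) = fsize w" using add calculation by auto
    moreover have "fsize (fst a) + fsize (snd a) = nverts t" using add calculation by auto
    ultimately show "fsize (fst x) + fsize (snd x) = fsize (add_mset t w)" by simp
  qed
qed

lemma grading_tree: "x \<in># cop_tree t \<Longrightarrow> fsize (fst x) + fsize (snd x) = nverts t"
proof (induction t arbitrary: x)
  case (Node ts)
  have F: "\<forall>y\<in># cop ts. fsize (fst y) + fsize (snd y) = fsize ts"
    by (rule grading_forest) (use Node.IH in auto)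
  from Node.prems show ?case
    using F by (auto simp: cop_tree_Node nverts_Node)
qed

lemma grading: "x \<in># cop w \<Longrightarrow> fsize (fst x) + fsize (snd x) = fsize w"
  using grading_forest[of w] grading_tree by blast

lemma filter_snd_tree: "filter_mset (\<lambda>x. snd x = {#}) (cop_tree t) = {#({#t#}, {#})#}"
  by (cases t) (auto simp: cop_tree_Node filter_mset_image_mset case_prod_beta)

lemma filter_snd: "filter_mset (\<lambda>x. snd x = {#}) (cop w) = {#(w, {#})#}"
proof (induction w)
  case empty then show ?case by (simp add: zero_prod_def)
next
  case (add t w)
  have "filter_mset (\<lambda>x. snd x = {#}) (cop (add_mset t w)) =
     pm (filter_mset (\<lambda>x. snd x = {#}) (cop_tree t)) (filter_mset (\<lambda>x. snd x = {#}) (cop w))"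
    unfolding cop_add by (rule filter_pm) auto
  then show ?case using add by (simp add: filter_snd_tree)
qed

lemma filter_fst_forest:
  assumes "\<And>t. t \<in># w \<Longrightarrow> filter_mset (\<lambda>x. fst x = {#}) (cop_tree t) = {#({#}, {#t#})#}"
  shows "filter_mset (\<lambda>x. fst x = {#}) (cop w) = {#({#}, w)#}"
  using assms
proof (induction w)
  case empty then show ?case by (simp add: zero_prod_def)
next
  case (add t w)
  have "filter_mset (\<lambda>x. fst x = {#}) (cop (add_mset t w)) =
     pm (filter_mset (\<lambda>x. fst x = {#}) (cop_tree t)) (filter_mset (\<lambda>x. fst x = {#}) (cop w))"
    unfolding cop_add by (rule filter_pm) auto
  then show ?case using add by simp
qed

lemma filter_fst_tree: "filter_mset (\<lambda>x. fst x = {#}) (cop_tree t) = {#({#}, {#t#})#}"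
proof (induction t)
  case (Node ts)
  have F: "filter_mset (\<lambda>x. fst x = {#}) (cop ts) = {#({#}, ts)#}"
    by (rule filter_fst_forest) (use Node.IH in auto)
  show ?case
    by (simp add: cop_tree_Node filter_mset_image_mset case_prod_beta F)
qed

lemma filter_fst: "filter_mset (\<lambda>x. fst x = {#}) (cop w) = {#({#}, w)#}"
  by (rule filter_fst_forest) (rule filter_fst_tree)


lemma img_sum: "image_mset g (sum_mset (image_mset f M)) = sum_mset (image_mset (\<lambda>x. image_mset g (f x)) M)"
  by (induction M) auto

definition hL :: "forest \<times> forest \<Rightarrow> (forest \<times> forest \<times> forest) multiset" where
  "hL x = image_mset (\<lambda>y. (fst y, snd y, snd x)) (cop (fst x))"
definition hR :: "forest \<times> forest \<Rightarrow> (forest \<times> forest \<times> forest) multiset" where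
  "hR x = image_mset (\<lambda>y. (fst x, fst y, snd y)) (cop (snd x))"
definition LL :: "forest \<Rightarrow> (forest \<times> forest \<times> forest) multiset" where
  "LL w = sum_mset (image_mset hL (cop w))"
definition RR :: "forest \<Rightarrow> (forest \<times> forest \<times> forest) multiset" where
  "RR w = sum_mset (image_mset hR (cop w))"

lemma hL_mult: "hL (x + y) = pm (hL x) (hL y)"
  unfolding hL_def by (simp add: cop_union, rule pm_image) simp
lemma hR_mult: "hR (x + y) = pm (hR x) (hR y)"
  unfolding hR_def by (simp add: cop_union, rule pm_image) simp

lemma LL_union: "LL (w + v) = pm (LL w) (LL v)"
  unfolding LL_def cop_union by (rule bind_pm) (rule hL_mult)
lemma RR_union: "RR (w + v) = pm (RR w) (RR v)"
  unfolding RR_def cop_union by (rule bind_pm) (rule hR_mult)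
lemma LL_empty: "LL {#} = {#0#}" by (simp add: LL_def hL_def zero_prod_def)
lemma RR_empty: "RR {#} = {#0#}" by (simp add: RR_def hR_def zero_prod_def)

lemma LR_forest:
  assumes "\<And>t. t \<in># w \<Longrightarrow> LL {#t#} = RR {#t#}"
  shows "LL w = RR w"
  using assms
proof (induction w)
  case empty then show ?case by (simp add: LL_empty RR_empty)
next
  case (add t w)
  have "LL (add_mset t w) = pm (LL {#t#}) (LL w)" using LL_union[of "{#t#}" w] by simp
  moreover have "RR (add_mset t w) = pm (RR {#t#}) (RR w)" using RR_union[of "{#t#}" w] by simp
  ultimately show ?case using add by simp
qed

lemma LR_tree: "LL {#t#} = RR {#t#}"
proof (induction t)
  case (Node ts)
  have IH: "LL ts = RR ts" by (rule LR_forest) (use Node.IH in auto)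
  let ?g = "\<lambda>(x::forest, y::forest, z::forest). (x, y, {#Node z#})"
  have L1: "hL ({#Node ts#}, {#}) = add_mset ({#Node ts#}, {#}, {#})
       (image_mset (\<lambda>(a, b). (a, {#Node b#}, {#})) (cop ts))"
    by (simp add: hL_def cop_tree_Node image_mset.compositionality o_def case_prod_beta)
      (rule image_mset_cong, auto)
  have L2: "sum_mset (image_mset (\<lambda>(a, b). hL (a, {#Node b#})) (cop ts)) = image_mset ?g (LL ts)"
    by (simp add: LL_def hL_def img_sum image_mset.compositionality o_def case_prod_beta)
      (intro arg_cong[where f=sum_mset] image_mset_cong, auto)
  have R1: "hR ({#Node ts#}, {#}) = {#({#Node ts#}, {#}, {#})#}"
    by (simp add: hR_def zero_prod_def)
  have R2: "sum_mset (image_mset (\<lambda>(a, b). hR (a, {#Node b#})) (cop ts)) =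
     image_mset (\<lambda>(a, b). (a, {#Node b#}, {#})) (cop ts) + image_mset ?g (RR ts)"
  proof -
    have e: "(\<lambda>(a,b). hR (a, {#Node b#})) = (\<lambda>x. add_mset ((\<lambda>(a, b). (a, {#Node b#}, {#})) x)
       ((\<lambda>x. image_mset (\<lambda>y. (fst x, fst y, {#Node (snd y)#})) (cop (snd x))) x))"
      by (auto simp: fun_eq_iff hR_def cop_tree_Node image_mset.compositionality o_def split_beta
          intro!: image_mset_cong)
    have s: "\<And>f g M. sum_mset (image_mset (\<lambda>x. add_mset (f x) (g x)) M) = image_mset f M + sum_mset (image_mset g M)"
      subgoal for f g M by (induction M) auto done
    show ?thesis unfolding e s
      by (simp add: RR_def hR_def img_sum image_mset.compositionality o_def case_prod_beta)
        (intro arg_cong[where f=sum_mset] image_mset_cong, auto)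
  qed
  have "LL {#Node ts#} = hL ({#Node ts#}, {#}) + sum_mset (image_mset (\<lambda>(a, b). hL (a, {#Node b#})) (cop ts))"
    by (simp add: LL_def cop_tree_Node image_mset.compositionality o_def case_prod_beta)
      (intro arg_cong[where f=sum_mset] image_mset_cong, auto)
  moreover have "RR {#Node ts#} = hR ({#Node ts#}, {#}) + sum_mset (image_mset (\<lambda>(a, b). hR (a, {#Node b#})) (cop ts))"
    by (simp add: RR_def cop_tree_Node image_mset.compositionality o_def case_prod_beta)
      (intro arg_cong[where f=sum_mset] image_mset_cong, auto)
  ultimately show ?case using L1 L2 R1 R2 IH by simp
qed

lemma LR: "LL w = RR w"
  by (rule LR_forest) (rule LR_tree)


lemma sum_bind: "sum_mset (image_mset f (sum_mset (image_mset h M))) =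
   sum_mset (image_mset (\<lambda>x. sum_mset (image_mset f (h x))) M)"
  by (induction M) auto

lemma conv_alt: "conv \<alpha> \<beta> w = sum_mset (image_mset (\<lambda>x. \<alpha> (fst x) * \<beta> (snd x)) (cop w))"
  unfolding conv_def by (intro arg_cong[where f=sum_mset] image_mset_cong) auto

lemma conv_assocL: "conv (conv \<alpha> \<beta>) \<gamma> w =
   sum_mset (image_mset (\<lambda>t. \<alpha> (fst t) * \<beta> (fst (snd t)) * \<gamma> (snd (snd t))) (LL w))"
  unfolding LL_def sum_bind conv_alt hL_def
  by (intro arg_cong[where f=sum_mset] image_mset_cong)
     (simp add: sum_mset_distrib_right image_mset.compositionality o_def)

lemma conv_assocR: "conv \<alpha> (conv \<beta> \<gamma>) w =
   sum_mset (image_mset (\<lambda>t. \<alpha> (fst t) * \<beta> (fst (snd t)) * \<gamma> (snd (snd t))) (RR w))"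
  unfolding RR_def sum_bind conv_alt hR_def
  by (intro arg_cong[where f=sum_mset] image_mset_cong)
     (simp add: sum_mset_distrib_left image_mset.compositionality o_def mult.assoc)

lemma conv_assoc: "conv (conv \<alpha> \<beta>) \<gamma> = conv \<alpha> (conv \<beta> \<gamma>)"
  by (rule ext) (simp add: conv_assocL conv_assocR LR)

lemma sum_split: "sum_mset (image_mset f M) = sum_mset (image_mset f (filter_mset P M)) +
    sum_mset (image_mset f (filter_mset (\<lambda>x. \<not> P x) M))"
  by (induction M) (auto simp: ac_simps)

lemma counit_empty[simp]: "counit {#} = 1" by (simp add: counit_def)

lemma conv_counit_left: "conv counit \<alpha> = \<alpha>"
proof
  fix w
  have "conv counit \<alpha> w = sum_mset (image_mset (\<lambda>x. counit (fst x) * \<alpha> (snd x)) (filter_mset (\<lambda>x. fst x = {#}) (cop w)))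
     + sum_mset (image_mset (\<lambda>x. counit (fst x) * \<alpha> (snd x)) (filter_mset (\<lambda>x. fst x \<noteq> {#}) (cop w)))"
    unfolding conv_alt by (rule sum_split)
  also have "sum_mset (image_mset (\<lambda>x. counit (fst x) * \<alpha> (snd x)) (filter_mset (\<lambda>x. fst x \<noteq> {#}) (cop w))) = 0"
    by (rule sum_mset.neutral) (auto simp: counit_def)
  finally show "conv counit \<alpha> w = \<alpha> w" by (simp add: filter_fst)
qed

lemma conv_counit_right: "conv \<alpha> counit = \<alpha>"
proof
  fix w
  have "conv \<alpha> counit w = sum_mset (image_mset (\<lambda>x. \<alpha> (fst x) * counit (snd x)) (filter_mset (\<lambda>x. snd x = {#}) (cop w)))
     + sum_mset (image_mset (\<lambda>x. \<alpha> (fst x) * counit (snd x)) (filter_mset (\<lambda>x. snd x \<noteq> {#}) (cop w)))"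
    unfolding conv_alt by (rule sum_split)
  also have "sum_mset (image_mset (\<lambda>x. \<alpha> (fst x) * counit (snd x)) (filter_mset (\<lambda>x. snd x \<noteq> {#}) (cop w))) = 0"
    by (rule sum_mset.neutral) (auto simp: counit_def)
  finally show "conv \<alpha> counit w = \<alpha> w" by (simp add: filter_snd)
qed


lemma image_mset_fcong[fundef_cong]:
  "M = N \<Longrightarrow> (\<And>x. x \<in># N \<Longrightarrow> f x = g x) \<Longrightarrow> image_mset f M = image_mset g N"
  by (auto intro: image_mset_cong)

lemma size_fst_less: "x \<in># cop w \<Longrightarrow> snd x \<noteq> {#} \<Longrightarrow> fsize (fst x) < fsize w"
  using grading[of x w] fsize_zero_iff[of "snd x"] by linarith
lemma size_snd_less: "x \<in># cop w \<Longrightarrow> fst x \<noteq> {#} \<Longrightarrow> fsize (snd x) < fsize w"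
  using grading[of x w] fsize_zero_iff[of "fst x"] by linarith

function linv :: "(forest \<Rightarrow> 'a::comm_ring_1) \<Rightarrow> forest \<Rightarrow> 'a" where
  "linv X w = counit w - sum_mset (image_mset (\<lambda>x. linv X (fst x) * X (snd x))
      (filter_mset (\<lambda>x. snd x \<noteq> {#}) (cop w)))"
  by auto
termination
  by (relation "Wellfounded.measure (\<lambda>(X, w). fsize w)") (auto intro: size_fst_less)

function rinv :: "(forest \<Rightarrow> 'a::comm_ring_1) \<Rightarrow> forest \<Rightarrow> 'a" where
  "rinv X w = counit w - sum_mset (image_mset (\<lambda>x. X (fst x) * rinv X (snd x))
      (filter_mset (\<lambda>x. fst x \<noteq> {#}) (cop w)))"
  by auto
termination
  by (relation "Wellfounded.measure (\<lambda>(X, w). fsize w)") (auto intro: size_snd_less)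

declare linv.simps[simp del] rinv.simps[simp del]

lemma linv_conv:
  assumes "X {#} = (1::'a::comm_ring_1)"
  shows "conv (linv X) X = counit"
proof
  fix w
  have "conv (linv X) X w = sum_mset (image_mset (\<lambda>x. linv X (fst x) * X (snd x)) (filter_mset (\<lambda>x. snd x = {#}) (cop w)))
     + sum_mset (image_mset (\<lambda>x. linv X (fst x) * X (snd x)) (filter_mset (\<lambda>x. snd x \<noteq> {#}) (cop w)))"
    unfolding conv_alt by (rule sum_split)
  also have "\<dots> = counit w"
    using linv.simps[of X w] by (simp add: filter_snd assms)
  finally show "conv (linv X) X w = counit w" .
qed

lemma rinv_conv:
  assumes "X {#} = (1::'a::comm_ring_1)"
  shows "conv X (rinv X) = counit"
proof
  fix w
  have "conv X (rinv X) w = sum_mset (image_mset (\<lambda>x. X (fst x) * rinv X (snd x)) (filter_mset (\<lambda>x. fst x = {#}) (cop w)))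
     + sum_mset (image_mset (\<lambda>x. X (fst x) * rinv X (snd x)) (filter_mset (\<lambda>x. fst x \<noteq> {#}) (cop w)))"
    unfolding conv_alt by (rule sum_split)
  also have "\<dots> = counit w"
    using rinv.simps[of X w] by (simp add: filter_fst assms)
  finally show "conv X (rinv X) w = counit w" .
qed

lemma inv_unique:
  assumes "X {#} = (1::'a::comm_ring_1)" "conv \<psi> X = counit"
  shows "\<psi> = rinv X"
proof -
  have "\<psi> = conv \<psi> (conv X (rinv X))" by (simp add: rinv_conv assms conv_counit_right)
  also have "\<dots> = rinv X" by (simp add: conv_assoc[symmetric] assms conv_counit_left)
  finally show ?thesis .
qed

lemma conv_inv_eq:
  assumes "X {#} = (1::'a::comm_ring_1)"
  shows "conv_inv X = rinv X" and "conv (conv_inv X) X = counit" and "conv X (conv_inv X) = counit"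
proof -
  have l: "linv X = rinv X" by (rule inv_unique[of X, OF assms linv_conv[of X, OF assms]])
  show e: "conv_inv X = rinv X"
    unfolding conv_inv_def
    by (rule the_equality) (use l linv_conv[of X, OF assms] inv_unique[of X, OF assms] in auto)
  show "conv (conv_inv X) X = counit" using e l linv_conv[of X, OF assms] by simp
  show "conv X (conv_inv X) = counit" using e rinv_conv[of X, OF assms] by simp
qed


definition th :: "(nat \<Rightarrow> 'a) \<Rightarrow> (forest \<Rightarrow> 'a::comm_semiring_1) \<Rightarrow> forest \<Rightarrow> 'a" where
  "th c \<psi> w = c (fsize w) * \<psi> w"

lemma th_conv:
  assumes "\<And>m n. c (m + n) = c m * c n"
  shows "th c (conv \<alpha> \<beta>) = conv (th c \<alpha>) (th c \<beta>)"
proof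
  fix w
  have "conv (th c \<alpha>) (th c \<beta>) w = sum_mset (image_mset (\<lambda>x. c (fsize w) * (\<alpha> (fst x) * \<beta> (snd x))) (cop w))"
    unfolding conv_alt th_def
  proof (intro arg_cong[where f=sum_mset] image_mset_cong)
    fix x assume "x \<in># cop w"
    then have "c (fsize w) = c (fsize (fst x)) * c (fsize (snd x))" using grading[of x w] assms by metis
    then show "c (fsize (fst x)) * \<alpha> (fst x) * (c (fsize (snd x)) * \<beta> (snd x)) =
       c (fsize w) * (\<alpha> (fst x) * \<beta> (snd x))" by (simp add: ac_simps)
  qed
  then show "th c (conv \<alpha> \<beta>) w = conv (th c \<alpha>) (th c \<beta>) w"
    by (simp add: th_def conv_alt sum_mset_distrib_left)
qed

lemma th_counit: "c 0 = 1 \<Longrightarrow> th c counit = counit"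
  by (auto simp: th_def counit_def fun_eq_iff)

lemma th_inv:
  assumes "\<And>m n. c (m + n) = c m * c n" "c 0 = 1" "X {#} = (1::'a::comm_ring_1)"
  shows "conv_inv (th c X) = th c (conv_inv X)"
proof -
  have X1: "th c X {#} = 1" using assms by (simp add: th_def)
  have "conv (th c (conv_inv X)) (th c X) = counit"
    using th_conv[of c, OF assms(1)] conv_inv_eq(2)[of X, OF assms(3)] th_counit[of c, OF assms(2)]
    by metis
  then have "th c (conv_inv X) = rinv (th c X)" by (rule inv_unique[of "th c X", OF X1])
  then show ?thesis using conv_inv_eq(1)[of "th c X", OF X1] by simp
qed

definition cc :: "complex \<Rightarrow> real \<Rightarrow> nat \<Rightarrow> complex" where
  "cc z t n = exp (- z * of_nat n * of_real t)"

lemma cc_mult: "cc z t (m + n) = cc z t m * cc z t n"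
  by (simp add: cc_def exp_add[symmetric] algebra_simps)
lemma cc_0: "cc z t 0 = 1" by (simp add: cc_def)
lemma th_th: "th (cc z a) (th (cc z b) \<psi>) = th (cc z (a + b)) \<psi>"
  by (simp add: fun_eq_iff th_def cc_def exp_add[symmetric] algebra_simps)

lemma phi_empty: "phi F s z {#} = 1"
  by (simp add: phi_def fsubsizes_def)

lemma phi_shift:
  assumes "s > 0"
  shows "phi F (s * exp t) z = th (cc z t) (phi F s z)"
proof
  fix w
  have "ln (s * exp t) = ln s + t" using assms by (simp add: ln_mult)
  then show "phi F (s * exp t) z w = th (cc z t) (phi F s z) w"
    by (simp add: phi_def th_def cc_def exp_add[symmetric] algebra_simps)
qed

lemma phiR_group:
  assumes "\<mu> > 0"
  shows "conv (phiR F \<mu> (\<mu> * exp a) z) (th (cc z a) (phiR F \<mu> (\<mu> * exp b) z)) = phiR F \<mu> (\<mu> * exp (a + b)) z"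
proof -
  let ?Y = "phi F \<mu> z"
  have Y1: "?Y {#} = 1" by (rule phi_empty)
  have A1: "th (cc z a) ?Y {#} = 1" using Y1 by (simp add: th_def cc_def)
  have "th (cc z a) (phiR F \<mu> (\<mu> * exp b) z) =
      conv (conv_inv (th (cc z a) ?Y)) (th (cc z (a + b)) ?Y)"
    unfolding phiR_def phi_shift[OF assms] th_conv[of "cc z a", OF cc_mult] th_th
      th_inv[of "cc z a" ?Y, OF cc_mult cc_0 Y1] ..
  then have "conv (phiR F \<mu> (\<mu> * exp a) z) (th (cc z a) (phiR F \<mu> (\<mu> * exp b) z)) =
     conv (conv (conv_inv ?Y) (th (cc z a) ?Y)) (conv (conv_inv (th (cc z a) ?Y)) (th (cc z (a + b)) ?Y))"
    unfolding phiR_def phi_shift[OF assms] by simp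
  also have "\<dots> = conv (conv_inv ?Y) (conv (conv (th (cc z a) ?Y) (conv_inv (th (cc z a) ?Y))) (th (cc z (a + b)) ?Y))"
    by (simp add: conv_assoc)
  also have "\<dots> = phiR F \<mu> (\<mu> * exp (a + b)) z"
    unfolding conv_inv_eq(3)[of "th (cc z a) ?Y", OF A1] conv_counit_left phiR_def phi_shift[OF assms] ..
  finally show ?thesis .
qed


lemma tendsto_sum_mset':
  fixes g :: "'c \<Rightarrow> 'd \<Rightarrow> 'b::topological_comm_monoid_add"
  shows "(\<And>x. x \<in># M \<Longrightarrow> ((\<lambda>z. g z x) \<longlongrightarrow> l x) F) \<Longrightarrow>
   ((\<lambda>z. sum_mset (image_mset (g z) M)) \<longlongrightarrow> sum_mset (image_mset l M)) F"
proof (induction M)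
  case empty then show ?case by simp
next
  case (add x M)
  have "((\<lambda>z. g z x) \<longlongrightarrow> l x) F" using add.prems by simp
  moreover have "((\<lambda>z. sum_mset (image_mset (g z) M)) \<longlongrightarrow> sum_mset (image_mset l M)) F"
    using add.IH add.prems by simp
  ultimately show ?case by (simp add: tendsto_add)
qed

lemma of_real_sum_mset': "of_real (sum_mset (image_mset f M)) = sum_mset (image_mset (\<lambda>x. of_real (f x)) M)"
  by (induction M) auto

lemma cc_lim: "((\<lambda>z. cc z t n) \<longlongrightarrow> 1) (at 0)"
proof -
  have "((\<lambda>z. exp (- z * of_nat n * complex_of_real t)) \<longlongrightarrow> exp (- 0 * of_nat n * complex_of_real t)) (at 0)"
    by (intro tendsto_intros)
  then show ?thesis by (simp add: cc_def)
qed

theorem mainTheorem9: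
  fixes f :: "real \<Rightarrow> real" and F :: "complex \<Rightarrow> complex" and \<mu> :: real
    and P :: "forest \<Rightarrow> real poly"
  assumes "generic_model f F" and "\<mu> > 0"
    and P: "\<And>w s. s > 0 \<Longrightarrow>
              ((\<lambda>z. phiR F \<mu> s z w) \<longlongrightarrow> complex_of_real (poly (P w) (ln (s / \<mu>)))) (at 0)"
  shows "\<forall>a b :: real. \<forall>w :: forest \<Rightarrow>\<^sub>0 real.
           lin (conv (\<lambda>v. poly (P v) a) (\<lambda>v. poly (P v) b)) w = lin (\<lambda>v. poly (P v) (a + b)) w"
proof (intro allI)
  fix a b :: real and w :: "forest \<Rightarrow>\<^sub>0 real"
  have Pe: "((\<lambda>z. phiR F \<mu> (\<mu> * exp t) z v) \<longlongrightarrow> complex_of_real (poly (P v) t)) (at 0)" for t v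
    using P[of "\<mu> * exp t" v] \<open>\<mu> > 0\<close> by simp
  have pt: "conv (\<lambda>v. poly (P v) a) (\<lambda>v. poly (P v) b) v = poly (P v) (a + b)" for v
  proof -
    have T: "((\<lambda>z. cc z a n * phiR F \<mu> (\<mu> * exp b) z u) \<longlongrightarrow> complex_of_real (poly (P u) b)) (at 0)" for n u
      using tendsto_mult[OF cc_lim[of a n] Pe[of b u]] by simp
    let ?G = "\<lambda>z. conv (phiR F \<mu> (\<mu> * exp a) z) (th (cc z a) (phiR F \<mu> (\<mu> * exp b) z)) v"
    have l1: "(?G \<longlongrightarrow> of_real (conv (\<lambda>v. poly (P v) a) (\<lambda>v. poly (P v) b) v)) (at 0)"
      unfolding conv_alt of_real_sum_mset' th_def
      by (rule tendsto_sum_mset') (auto intro!: tendsto_mult Pe T)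
    have l2: "(?G \<longlongrightarrow> of_real (poly (P v) (a + b))) (at 0)"
      unfolding phiR_group[OF \<open>\<mu> > 0\<close>] by (rule Pe)
    have "complex_of_real (conv (\<lambda>v. poly (P v) a) (\<lambda>v. poly (P v) b) v) = of_real (poly (P v) (a + b))"
      using tendsto_unique[OF _ l1 l2] by simp
    then show ?thesis by simp
  qed
  show "lin (conv (\<lambda>v. poly (P v) a) (\<lambda>v. poly (P v) b)) w = lin (\<lambda>v. poly (P v) (a + b)) w"
    unfolding lin_def pt ..
qed

end
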